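(* Let $n\ge p\ge1$, $0<\varepsilon<1$, $\lambda>0$. Let $X\in\mathbb{R}^{n\times p}$ with $\|X^\top X-I_p\|\le\varepsilon$, let $A\in\mathbb{R}^{n\times n}$ be skew-symmetric, let $F(X,A)=AX+\lambda X(X^\top X-I_p)$, and for a step size $\eta>0$ set $\tilde X=X-\eta F(X,A)$. Let $g=\|F(X,A)\|$ and $d=\|X^\top X-I_p\|$. If $$\eta\le\eta(X):=\min\left\{\frac{\lambda d(1-d)+\sqrt{\lambda^2d^2(1-d)^2+g^2(\varepsilon-d)}}{g^2},\ \frac{1}{2\lambda}\right\},$$ (with the first term interpreted as $+\infty$ when $g=0$), then $\|\tilde X^\top\tilde X-I_p\|\le\varepsilon$.
   Context: $\|\cdot\|$ denotes the Frobenius norm. *)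

theory Defs
  imports "HOL-Analysis.Analysis"
begin

definition frob_norm :: "real^'n^'m \<Rightarrow> real" where
  "frob_norm M = sqrt (\<Sum>i\<in>UNIV. \<Sum>j\<in>UNIV. (M $ i $ j)^2)"

definition Ffield :: "real \<Rightarrow> real^'p^'n \<Rightarrow> real^'n^'n \<Rightarrow> real^'p^'n" where
  "Ffield lam X A = A ** X + lam *\<^sub>R (X ** (transpose X ** X - mat 1))"

definition eta_bound :: "real \<Rightarrow> real \<Rightarrow> real^'p^'n \<Rightarrow> real^'n^'n \<Rightarrow> real" where
  "eta_bound eps lam X A =
    (let g = frob_norm (Ffield lam X A); d = frob_norm (transpose X ** X - mat 1) in
     if g = 0 then 1 / (2 * lam)
     else min ((lam * d * (1 - d) + sqrt (lam^2 * d^2 * (1 - d)^2 + g^2 * (eps - d))) / g^2)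
              (1 / (2 * lam)))"

end

theory Submission
  imports Defs
begin


definition fsq :: "real^'n^'m \<Rightarrow> real" where
  "fsq M = (\<Sum>i\<in>UNIV. \<Sum>j\<in>UNIV. (M $ i $ j)^2)"

lemma frob_norm_eq: "frob_norm M = norm M"
proof -
  have "norm M = sqrt (\<Sum>i\<in>UNIV. (norm (M$i))^2)"
    by (simp add: norm_vec_def L2_set_def)
  also have "\<dots> = frob_norm M"
    unfolding frob_norm_def
    by (simp add: norm_vec_def L2_set_def sum_nonneg)
  finally show ?thesis by simp
qed

lemma frob_norm_fsq: "frob_norm M = sqrt (fsq M)"
  by (simp add: frob_norm_def fsq_def)

lemma fsq_transpose: "fsq (transpose M) = fsq M"
  unfolding fsq_def transpose_def by simp (rule sum.swap)

lemma fsq_mult: fixes A :: "real^'n^'m" shows "fsq (A ** B) \<le> fsq A * fsq B"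
proof -
  have "fsq (A ** B) = (\<Sum>i\<in>UNIV. \<Sum>k\<in>UNIV. (\<Sum>j\<in>UNIV. A$i$j * B$j$k)^2)"
    by (simp add: fsq_def matrix_matrix_mult_def)
  also have "\<dots> \<le> (\<Sum>i\<in>UNIV. \<Sum>k\<in>UNIV. (\<Sum>j\<in>UNIV. (A$i$j)^2) * (\<Sum>j\<in>UNIV. (B$j$k)^2))"
    by (intro sum_mono Cauchy_Schwarz_ineq_sum)
  also have "\<dots> = (\<Sum>i\<in>UNIV. \<Sum>j\<in>UNIV. (A$i$j)^2) * (\<Sum>k\<in>UNIV. \<Sum>j\<in>UNIV. (B$j$k)^2)"
    by (rule sum_product[symmetric])
  also have "\<dots> = fsq A * fsq B"
    unfolding fsq_def by (simp only: sum.swap[of "\<lambda>k j. (B$j$k)^2"])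
  finally show ?thesis .
qed

lemma norm_fsq: "norm (M::real^'n^'m) = sqrt (fsq M)"
  by (metis frob_norm_eq frob_norm_fsq)

lemma norm_transpose: "norm (transpose (M::real^'n^'m)) = norm M"
  by (simp only: norm_fsq fsq_transpose)

lemma norm_mmult: fixes A :: "real^'n^'m" shows "norm (A ** B) \<le> norm A * norm B"
proof -
  have "sqrt (fsq (A ** B)) \<le> sqrt (fsq A * fsq B)" by (rule real_sqrt_le_mono[OF fsq_mult])
  thus ?thesis by (simp only: norm_fsq real_sqrt_mult)
qed

lemma mscal_r: "(A::real^'n^'m) ** (k *\<^sub>R B) = k *\<^sub>R (A ** B)"
  by (simp add: matrix_scalar_ac scalar_matrix_assoc)
lemma mscal_l: "(k *\<^sub>R (A::real^'n^'m)) ** B = k *\<^sub>R (A ** B)"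
  by (simp add: scalar_matrix_assoc)

lemma vec_alg:
  fixes S T P R :: "'a::real_vector"
  shows "S - e *\<^sub>R (P + l *\<^sub>R (T + S)) - e *\<^sub>R (- P + l *\<^sub>R (T + S)) + R
       = (1 - 2*e*l) *\<^sub>R S - (2*e*l) *\<^sub>R T + R"
proof -
  have h: "\<And>x::'a. (2*e*l) *\<^sub>R x = (e*l) *\<^sub>R x + (e*l) *\<^sub>R x"
    by (metis scaleR_add_left mult_2 mult.assoc)
  show ?thesis unfolding scaleR_diff_left h by (simp add: algebra_simps)
qed

lemma mrdistrib: "(A + B) ** (C::real^_^_) = A ** C + B ** C"
  by (vector matrix_matrix_mult_def sum.distrib[symmetric] field_simps)
lemma mldiff: "(A::real^_^_) ** (B - C) = A ** B - A ** C"
  by (vector matrix_matrix_mult_def sum_subtractf[symmetric] field_simps)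
lemma mrdiff: "(A - B) ** (C::real^_^_) = A ** C - B ** C"
  by (vector matrix_matrix_mult_def sum_subtractf[symmetric] field_simps)
lemma mlneg: "(- A) ** (C::real^_^_) = - (A ** C)"
  by (vector matrix_matrix_mult_def sum_negf[symmetric] field_simps)
lemma mrneg: "(A::real^_^_) ** (- C) = - (A ** C)"
  by (vector matrix_matrix_mult_def sum_negf[symmetric] field_simps)
lemma transpose_add: "transpose (A + B) = transpose A + transpose B"
  by (vector transpose_def)
lemma transpose_diff: "transpose (A - B) = transpose A - transpose B"
  by (vector transpose_def)



lemma real_ineq:
  fixes d eps lam eta g :: real
  assumes "0 \<le> d" "d \<le> eps" "eps < 1" "0 < lam" "0 < eta" "0 \<le> g"
    and "g = 0 \<or> eta \<le> (lam * d * (1 - d) + sqrt (lam^2 * d^2 * (1 - d)^2 + g^2 * (eps - d))) / g^2"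
  shows "d - 2 * eta * lam * d * (1 - d) + eta^2 * g^2 \<le> eps"
proof -
  define b where "b = lam * d * (1 - d)"
  have b0: "0 \<le> b" using assms unfolding b_def by simp
  show ?thesis
  proof (cases "g = 0")
    case True
    have "0 \<le> eta * lam * (d * (1 - d))" using assms by simp
    moreover have "d - 2 * eta * lam * d * (1 - d) = d - 2 * (eta * lam * (d * (1 - d)))" by (simp add: algebra_simps)
    ultimately show ?thesis using True assms(2) by simp
  next
    case False
    then have g0: "0 < g" using assms by simp
    define r where "r = sqrt (b^2 + g^2 * (eps - d))"
    have nn: "0 \<le> b^2 + g^2 * (eps - d)" using assms(2)
      by (intro add_nonneg_nonneg mult_nonneg_nonneg) auto
    have rr: "r^2 = b^2 + g^2 * (eps - d)" unfolding r_def using nn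
      by (rule real_sqrt_pow2)
    have r0: "0 \<le> r" unfolding r_def using nn by simp
    have "eta \<le> (b + r) / g^2" using assms False nn unfolding b_def r_def
      by (simp add: power_mult_distrib)
    then have h: "eta * g^2 \<le> b + r" using g0 by (simp add: pos_le_divide_eq)
    have "eta^2 * g^2 - 2 * eta * b \<le> eps - d"
    proof (cases "eta * g^2 \<le> b")
      case True
      then have "eta * (eta * g^2) \<le> eta * b" using assms by (simp add: mult_left_mono)
      moreover have "0 \<le> eta * b" using assms b0 by simp
      moreover have "eta^2 * g^2 = eta * (eta * g^2)" by (simp add: power2_eq_square)
      ultimately show ?thesis using assms(2) by linarith
    next
      case False
      then have "0 \<le> eta * g^2 - b" "eta * g^2 - b \<le> r" using h by auto
      then have "(eta * g^2 - b)^2 \<le> r^2" by (simp add: power_mono)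
      then have "g^2 * (eta^2 * g^2 - 2 * eta * b) \<le> g^2 * (eps - d)"
        using rr by (simp add: power2_eq_square algebra_simps)
      then show ?thesis using g0 by simp
    qed
    then show ?thesis unfolding b_def by (simp add: algebra_simps)
  qed
qed


theorem lemma3:
  fixes X :: "real^'p^'n" and A :: "real^'n^'n" and eps lam eta :: real
  assumes "CARD('p) \<le> CARD('n)"
    and "0 < eps" and "eps < 1" and "0 < lam"
    and "frob_norm (transpose X ** X - mat 1) \<le> eps"
    and "transpose A = - A"
    and "0 < eta" and "eta \<le> eta_bound eps lam X A"
  shows "frob_norm (transpose (X - eta *\<^sub>R Ffield lam X A) ** (X - eta *\<^sub>R Ffield lam X A) - mat 1) \<le> eps"
proof -
  define F where "F = Ffield lam X A"
  define M where "M = transpose X ** X"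
  define S where "S = M - mat 1"
  define g where "g = norm F"
  define d where "d = norm S"
  have ST: "transpose S = S"
    unfolding S_def M_def by (simp add: transpose_diff matrix_transpose_mul)
  have MS: "M = S + mat 1" unfolding S_def by simp
  have FT: "transpose F = - (transpose X ** A) + lam *\<^sub>R (S ** transpose X)"
    unfolding F_def Ffield_def M_def[symmetric] S_def[symmetric]
    using ST assms(6) by (simp add: transpose_add transpose_scalar matrix_transpose_mul mrneg)
  have e1: "transpose X ** F = (transpose X ** A) ** X + lam *\<^sub>R (S ** S + S)"
  proof -
    have "transpose X ** (X ** S) = S ** S + S"
      by (simp add: matrix_mul_assoc M_def[symmetric] MS mrdistrib)
    moreover have "F = A ** X + lam *\<^sub>R (X ** S)"
      unfolding F_def Ffield_def S_def M_def ..
    ultimately show ?thesis by (simp only: matrix_add_ldistrib mscal_r matrix_mul_assoc)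
  qed
  have e2: "transpose F ** X = - ((transpose X ** A) ** X) + lam *\<^sub>R (S ** S + S)"
  proof -
    have "(S ** transpose X) ** X = S ** S + S"
      by (simp add: matrix_mul_assoc[symmetric] M_def[symmetric] MS matrix_add_ldistrib)
    then show ?thesis unfolding FT by (simp only: mrdistrib mlneg mscal_l)
  qed
  have e3: "transpose (X - eta *\<^sub>R F) ** (X - eta *\<^sub>R F) - mat 1
      = S - eta *\<^sub>R (transpose X ** F) - eta *\<^sub>R (transpose F ** X) + eta^2 *\<^sub>R (transpose F ** F)"
    by (simp add: transpose_diff transpose_scalar mldiff mrdiff matrix_scalar_ac scalar_matrix_assoc
        M_def[symmetric] MS power2_eq_square algebra_simps)
  have key: "transpose (X - eta *\<^sub>R F) ** (X - eta *\<^sub>R F) - mat 1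
      = (1 - 2 * eta * lam) *\<^sub>R S - (2 * eta * lam) *\<^sub>R (S ** S) + eta^2 *\<^sub>R (transpose F ** F)"
    unfolding e3 e1 e2 by (rule vec_alg)
  have d0: "0 \<le> d" unfolding d_def by simp
  have deps: "d \<le> eps" using assms(5) unfolding d_def S_def M_def frob_norm_eq .
  have g0: "0 \<le> g" unfolding g_def by simp
  have etab: "eta \<le> 1 / (2 * lam)" and etag: "g = 0 \<or> eta \<le> (lam * d * (1 - d) + sqrt (lam^2 * d^2 * (1 - d)^2 + g^2 * (eps - d))) / g^2"
    using assms(8) unfolding eta_bound_def Let_def frob_norm_eq F_def[symmetric] g_def[symmetric]
      M_def[symmetric] S_def[symmetric] d_def[symmetric]
    by (auto split: if_splits)
  have c0: "0 \<le> 1 - 2 * eta * lam" using etab assms(4) by (simp add: field_simps)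
  have "norm ((1 - 2 * eta * lam) *\<^sub>R S - (2 * eta * lam) *\<^sub>R (S ** S) + eta^2 *\<^sub>R (transpose F ** F))
     \<le> norm ((1 - 2 * eta * lam) *\<^sub>R S) + norm ((2 * eta * lam) *\<^sub>R (S ** S)) + norm (eta^2 *\<^sub>R (transpose F ** F))"
    by (meson add_mono norm_triangle_ineq norm_triangle_ineq4 order_trans order_refl)
  also have "\<dots> \<le> (1 - 2 * eta * lam) * d + (2 * eta * lam) * (d * d) + eta^2 * (g * g)"
  proof -
    have "norm (S ** S) \<le> d * d" unfolding d_def by (rule norm_mmult)
    moreover have "norm (transpose F ** F) \<le> g * g" unfolding g_def
      using norm_mmult[of "transpose F" F] norm_transpose[of F] by simp
    ultimately show ?thesis using c0 assms(4,7) unfolding d_def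
      by (intro add_mono) (auto intro: mult_left_mono)
  qed
  also have "\<dots> = d - 2 * eta * lam * d * (1 - d) + eta^2 * g^2"
    by (simp add: power2_eq_square algebra_simps)
  also have "\<dots> \<le> eps"
    by (rule real_ineq[OF d0 deps assms(3) assms(4) assms(7) g0 etag])
  finally show ?thesis unfolding frob_norm_eq F_def[symmetric] key .
qed

end
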